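(* For all integers $d\ge 1$ and $1\le p_1\le\cdots\le p_d\le n$ we have $$W_n(p_1,\ldots,p_d)=n^d-q_n(p_1,\ldots,p_d).$$ In particular, for $d=2$ and $1\le p\le q\le n$, $W_n(p,q)=n^2-(n-p+1)^2+(q-p)^2$.
   Context: A $d$-uniform $d$-partite hypergraph $H$ has vertex classes $V_1,\ldots,V_d$ and its edges are $d$-sets containing exactly one vertex from each $V_i$; only such $d$-sets are ever considered as possible edges. $K^d_{p_1,\ldots,p_d}$ is the complete $d$-uniform $d$-partite hypergraph with class sizes $p_1,\ldots,p_d$. A copy of $K^d_{p_1,\ldots,p_d}$ in $H$ is a choice of a permutation $\pi:[d]\to[d]$ and sets $S_i\subseteq V_i$ with $|S_i|=p_{\pi(i)}$ such that every $d$-set with one vertex from each $S_i$ is an edge of $H$ (the class sizes may appear in any order across $V_1,\ldots,V_d$). $H$ is weakly $K^d_{p_1,\ldots,p_d}$-saturated if all $d$-sets with one vertex from each $V_i$ that are not edges of $H$ can be added to $H$ one at a time, in some order, so that each added edge creates a new copy of $K^d_{p_1,\ldots,p_d}$ (i.e., one containing the added edge). $W_n(p_1,\ldots,p_d)$ is the minimum number of edges of a weakly $K^d_{p_1,\ldots,p_d}$-saturated $d$-uniform $d$-partite hypergraph with $n$ vertices in each class. For $x\in[n]^d$, $x_{(i)}$ denotes the $i$-th smallest entry of $x$ when sorted with repetitions; $q_n(p_1,\ldots,p_d)$ is the number of $x\in[n]^d$ with $x_{(i)}\ge p_i$ for all $1\le i\le d$. *)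

theory Defs
  imports "HOL-Library.FuncSet" "HOL-Combinatorics.Permutations"
begin

text \<open>Vertex class i (for i in 1..d) is a copy of {1..n}; a potential edge
(d-set with one vertex per class) is a function in {1..d} ->E {1..n}.
A hypergraph is a set of such functions.\<close>

definition all_edges :: "nat \<Rightarrow> nat \<Rightarrow> (nat \<Rightarrow> nat) set" where
  "all_edges n d = ({1..d} \<rightarrow>\<^sub>E {1..n})"

text \<open>A copy of K^d_{p_1..p_d} in H containing edge e; p is indexed by 1..d.\<close>
definition copy_containing ::
  "nat \<Rightarrow> nat \<Rightarrow> (nat \<Rightarrow> nat) \<Rightarrow> (nat \<Rightarrow> nat) set \<Rightarrow> (nat \<Rightarrow> nat) \<Rightarrow> bool" where
  "copy_containing n d p H e \<longleftrightarrow>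
     (\<exists>\<pi> S. \<pi> permutes {1..d} \<and>
        (\<forall>i\<in>{1..d}. S i \<subseteq> {1..n} \<and> card (S i) = p (\<pi> i)) \<and>
        e \<in> (PiE {1..d} S) \<and> (PiE {1..d} S) \<subseteq> H)"

definition weakly_saturated ::
  "nat \<Rightarrow> nat \<Rightarrow> (nat \<Rightarrow> nat) \<Rightarrow> (nat \<Rightarrow> nat) set \<Rightarrow> bool" where
  "weakly_saturated n d p H \<longleftrightarrow>
     H \<subseteq> all_edges n d \<and>
     (\<exists>es. distinct es \<and> set es = all_edges n d - H \<and>
        (\<forall>k<length es. copy_containing n d p (H \<union> set (take (Suc k) es)) (es ! k)))"

definition W :: "nat \<Rightarrow> nat \<Rightarrow> (nat \<Rightarrow> nat) \<Rightarrow> nat" where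
  "W n d p = Min (card ` {H. weakly_saturated n d p H})"

text \<open>x_(i): i-th smallest entry (1-indexed) of x, with repetitions.\<close>
definition ord_stat :: "nat \<Rightarrow> (nat \<Rightarrow> nat) \<Rightarrow> nat \<Rightarrow> nat" where
  "ord_stat d x i = sort (map x [1..<d+1]) ! (i - 1)"

definition q :: "nat \<Rightarrow> nat \<Rightarrow> (nat \<Rightarrow> nat) \<Rightarrow> nat" where
  "q n d p = card {x \<in> ({1..d} \<rightarrow>\<^sub>E {1..n}). \<forall>i\<in>{1..d}. ord_stat d x i \<ge> p i}"

end

theory Submission
  imports Defs Complex_Main "HOL-Library.Function_Algebras" "HOL-Computational_Algebra.Polynomial"
begin


lemma p_mono:
  fixes p :: "nat \<Rightarrow> nat" and i j d :: nat
  assumes "\<forall>i\<in>{1..<d}. p i \<le> p (i+1)" "1 \<le> i"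
  shows "i \<le> j \<Longrightarrow> j \<le> d \<Longrightarrow> p i \<le> (p j :: nat)"
proof (induction j)
  case 0 then show ?case using assms(2) by simp
next
  case (Suc j)
  show ?case
  proof (cases "i = Suc j")
    case True then show ?thesis by simp
  next
    case False
    then have "i \<le> j" using Suc.prems by simp
    then have "p i \<le> p j" using Suc by simp
    also have "p j \<le> p (j+1)" using assms(1) \<open>i \<le> j\<close> assms(2) Suc.prems by auto
    finally show ?thesis by simp
  qed
qed

lemma ord_stat_count:
  assumes "i \<in> {1..d}"
  shows "i \<le> card {j\<in>{1..d}. x j \<le> ord_stat d x i}"
proof -
  define xs where "xs = map x [1..<d+1]"
  define L where "L = sort xs"
  define v where "v = L ! (i-1)"
  have lenL: "length L = d" unfolding L_def xs_def by simp
  have srt: "sorted L" unfolding L_def by simp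
  have "\<forall>a\<in>set (take i L). a \<le> v"
  proof
    fix a assume "a \<in> set (take i L)"
    then obtain k where k: "k < length (take i L)" "a = take i L ! k" by (metis in_set_conv_nth)
    then have "k < i" "a = L ! k" by auto
    then show "a \<le> v" unfolding v_def using sorted_nth_mono[OF srt, of k "i-1"] lenL assms by auto
  qed
  then have "filter (\<lambda>a. a \<le> v) (take i L) = take i L" by simp
  then have "i = length (filter (\<lambda>a. a \<le> v) (take i L))" using lenL assms by simp
  also have "\<dots> \<le> length (filter (\<lambda>a. a \<le> v) L)"
    by (metis append_take_drop_id filter_append le_add1 length_append)
  also have "\<dots> = length (filter (\<lambda>a. a \<le> v) xs)"
    unfolding L_def by (metis mset_filter mset_sort size_mset)
  also have "\<dots> = length (filter (\<lambda>j. x j \<le> v) [1..<d+1])"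
    unfolding xs_def by (simp add: filter_map o_def)
  also have "\<dots> = card {j\<in>{1..d}. x j \<le> v}"
    by (subst distinct_length_filter) (auto intro: arg_cong[where f=card])
  finally show ?thesis unfolding v_def L_def xs_def ord_stat_def by simp
qed




lemma perm_imp_Q:
  fixes p :: "nat \<Rightarrow> nat"
  assumes mono: "\<forall>i\<in>{1..<d}. p i \<le> p (i+1)" and pi: "\<pi> permutes {1..d}"
    and le: "\<forall>j\<in>{1..d}. p (\<pi> j) \<le> x j" and i: "i \<in> {1..d}"
  shows "p i \<le> ord_stat d x i"
proof (rule ccontr)
  define v where "v = ord_stat d x i"
  assume "\<not> p i \<le> ord_stat d x i"
  then have vlt: "v < p i" unfolding v_def by simp
  define J where "J = {j\<in>{1..d}. x j \<le> v}"
  have ci: "i \<le> card J" unfolding J_def v_def using ord_stat_count[OF i] by simp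
  have sub: "\<pi> ` J \<subseteq> {1..<i}"
  proof
    fix k assume "k \<in> \<pi> ` J"
    then obtain j where j: "j \<in> J" "k = \<pi> j" by auto
    have jD: "j \<in> {1..d}" using j unfolding J_def by auto
    have kD: "k \<in> {1..d}" using j jD permutes_in_image[OF pi] by auto
    show "k \<in> {1..<i}"
    proof (rule ccontr)
      assume "k \<notin> {1..<i}"
      then have "i \<le> k" using kD by auto
      then have "p i \<le> p k" using p_mono[OF mono, of i k] i kD by auto
      also have "\<dots> \<le> x j" using le jD j by auto
      also have "\<dots> \<le> v" using j unfolding J_def by auto
      finally show False using vlt by simp
    qed
  qed
  have "inj_on \<pi> J" using permutes_inj_on[OF pi] .
  then have "card J = card (\<pi> ` J)" by (simp add: card_image)
  also have "\<dots> \<le> card {1..<i}" by (rule card_mono[OF _ sub]) simp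
  also have "\<dots> < i" using i by simp
  finally show False using ci by simp
qed

lemma Q_imp_perm:
  fixes p :: "nat \<Rightarrow> nat"
  assumes le: "\<forall>i\<in>{1..d}. p i \<le> ord_stat d x i"
  shows "\<exists>\<pi>. \<pi> permutes {1..d} \<and> (\<forall>j\<in>{1..d}. p (\<pi> j) \<le> x j)"
proof -
  define idx where "idx = sort_key x [1..<d+1]"
  have mi: "mset idx = mset [1..<d+1]" unfolding idx_def by simp
  have dist: "distinct idx" using mi by (metis distinct_upt mset_eq_imp_distinct_iff)
  have setidx: "set idx = {1..d}" using mi by (metis atLeastLessThanSuc_atLeastAtMost set_mset_mset set_upt Suc_eq_plus1)
  have len: "length idx = d" using mi by (metis length_upt size_mset diff_add_inverse2)
  have sortL: "sort (map x [1..<d+1]) = map x idx"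
    unfolding idx_def by (rule properties_for_sort) (auto simp: mi[unfolded idx_def])
  define s where "s = (\<lambda>i. if i \<in> {1..d} then idx ! (i-1) else i)"
  have bij0: "bij_betw ((!) idx) {..<d} {1..d}"
    using bij_betw_nth[OF dist] len setidx by auto
  have bij1: "bij_betw (\<lambda>i. i - 1) {1..d} {..<d}"
    by (rule bij_betw_byWitness[where f'="\<lambda>i. i+1"]) auto
  have "bij_betw ((!) idx \<circ> (\<lambda>i. i - 1)) {1..d} {1..d}"
    using bij_betw_trans[OF bij1 bij0] .
  then have "bij_betw s {1..d} {1..d}"
    by (rule bij_betw_cong[THEN iffD1, rotated]) (simp add: s_def)
  then have sp: "s permutes {1..d}"
    by (rule bij_imp_permutes) (auto simp add: s_def)
  define \<pi> where "\<pi> = inv s"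
  have pp: "\<pi> permutes {1..d}" unfolding \<pi>_def using permutes_inv[OF sp] .
  have "\<forall>j\<in>{1..d}. p (\<pi> j) \<le> x j"
  proof
    fix j assume j: "j \<in> {1..d}"
    have kD: "\<pi> j \<in> {1..d}" using permutes_in_image[OF pp] j by simp
    have sj: "s (\<pi> j) = j" unfolding \<pi>_def using permutes_inverses(1)[OF sp] by simp
    have "ord_stat d x (\<pi> j) = map x idx ! (\<pi> j - 1)"
      unfolding ord_stat_def sortL by simp
    also have "\<dots> = x (idx ! (\<pi> j - 1))" using kD len by (intro nth_map) auto
    also have "\<dots> = x j" using sj kD by (simp add: s_def)
    finally show "p (\<pi> j) \<le> x j" using le kD by metis
  qed
  then show ?thesis using pp by blast
qed




definition QQ :: "nat \<Rightarrow> nat \<Rightarrow> (nat \<Rightarrow> nat) \<Rightarrow> (nat \<Rightarrow> nat) set" where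
  "QQ n d p = {x \<in> ({1..d} \<rightarrow>\<^sub>E {1..n}). \<forall>i\<in>{1..d}. ord_stat d x i \<ge> p i}"

lemma q_QQ: "q n d p = card (QQ n d p)" unfolding q_def QQ_def by simp

lemma finite_E: "finite (all_edges n d)" unfolding all_edges_def by (simp add: finite_PiE)

lemma card_E: "card (all_edges n d) = n ^ d" unfolding all_edges_def by (simp add: card_PiE)

lemma QQ_sub: "QQ n d p \<subseteq> all_edges n d" unfolding QQ_def all_edges_def by auto

lemma upper:
  fixes p :: "nat \<Rightarrow> nat"
  assumes mono: "\<forall>i\<in>{1..<d}. p i \<le> p (i+1)" and p1: "1 \<le> p 1" and pd: "p d \<le> n"
  shows "weakly_saturated n d p (all_edges n d - QQ n d p)"
proof -
  let ?E = "all_edges n d" and ?Q = "QQ n d p" and ?D = "{1..d}"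
  define key where "key = (\<lambda>x::nat\<Rightarrow>nat. \<Sum>j\<in>{1..d}. x j)"
  have finQ: "finite ?Q" using finite_subset[OF QQ_sub finite_E] .
  obtain xs0 where xs0: "distinct xs0" "set xs0 = ?Q" using finite_distinct_list[OF finQ] by blast
  define es where "es = sort_key key xs0"
  have dist: "distinct es" unfolding es_def using xs0 by simp
  have set_es: "set es = ?Q" unfolding es_def using xs0 by simp
  have srt: "sorted (map key es)" unfolding es_def by simp
  have pbound: "1 \<le> p i \<and> p i \<le> n" if "i \<in> ?D" for i
    using p_mono[OF mono, of 1 i] p_mono[OF mono, of i d] that p1 pd by auto
  have "copy_containing n d p ((?E - ?Q) \<union> set (take (Suc k) es)) (es ! k)" if k: "k < length es" for k
  proof -
    define e where "e = es ! k"
    have eQ: "e \<in> ?Q" using k set_es unfolding e_def by (metis nth_mem)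
    then have eE: "e \<in> ({1..d} \<rightarrow>\<^sub>E {1..n})" unfolding QQ_def by auto
    obtain \<pi> where pi: "\<pi> permutes ?D" "\<forall>j\<in>?D. p (\<pi> j) \<le> e j"
      using Q_imp_perm[of d p e] eQ unfolding QQ_def by auto
    define S where "S = (\<lambda>j. {1..<p (\<pi> j)} \<union> {e j})"
    have piD: "\<pi> j \<in> ?D" if "j \<in> ?D" for j using permutes_in_image[OF pi(1)] that by simp
    have Ssub: "S j \<subseteq> {1..n}" if j: "j \<in> ?D" for j
      using pbound[OF piD[OF j]] eE j unfolding S_def by (auto simp: PiE_iff)
    have Scard: "card (S j) = p (\<pi> j)" if j: "j \<in> ?D" for j
    proof -
      have "p (\<pi> j) \<le> e j" using pi(2) j by blast
      then have "e j \<notin> {1..<p (\<pi> j)}" by auto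
      then show ?thesis unfolding S_def using pbound[OF piD[OF j]] by simp
    qed
    have eS: "e \<in> PiE ?D S" using eE unfolding S_def by (auto simp: PiE_iff)
    have box: "PiE ?D S \<subseteq> (?E - ?Q) \<union> set (take (Suc k) es)"
    proof
      fix y assume y: "y \<in> PiE ?D S"
      have yE: "y \<in> ?E" unfolding all_edges_def using y Ssub by (auto simp: PiE_iff) (meson atLeastAtMost_iff subsetD)+
      show "y \<in> (?E - ?Q) \<union> set (take (Suc k) es)"
      proof (cases "y \<in> ?Q")
        case False then show ?thesis using yE by simp
      next
        case True
        then obtain m where m: "m < length es" "y = es ! m" using set_es by (metis in_set_conv_nth)
        show ?thesis
        proof (cases "m \<le> k")
          case True
          then have "y \<in> set (take (Suc k) es)" using m k by (auto simp: in_set_conv_nth intro!: exI[of _ m])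
          then show ?thesis by simp
        next
          case False
          have ne: "y \<noteq> e" using False m dist k unfolding e_def by (simp add: nth_eq_iff_index_eq)
          have le: "\<forall>j\<in>?D. y j \<le> e j" using y pi(2) unfolding S_def by (force simp: PiE_iff)
          have "\<exists>j\<in>?D. y j \<noteq> e j"
            using ne y eS by (metis PiE_ext)
          then have "\<exists>j\<in>?D. y j < e j" using le by (meson le_neq_implies_less)
          then have "key y < key e" unfolding key_def
            by (intro sum_strict_mono_ex1) (use le in auto)
          moreover have "key e \<le> key y"
            using sorted_nth_mono[OF srt, of k m] False m k unfolding e_def by simp
          ultimately show ?thesis by simp
        qed
      qed
    qed
    show ?thesis unfolding copy_containing_def e_def[symmetric]
      using pi(1) Ssub Scard eS box by blast
  qed
  moreover have "set es = ?E - (?E - ?Q)" using set_es QQ_sub by blast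
  ultimately show ?thesis unfolding weakly_saturated_def using dist by blast
qed

lemma card_upper:
  "card (all_edges n d - QQ n d p) = n ^ d - card (QQ n d p)"
  using card_Diff_subset[OF finite_subset[OF QQ_sub finite_E] QQ_sub] card_E by simp




lemma sum_fun_apply: "(\<Sum>x\<in>A. f x) c = (\<Sum>x\<in>A. f x c)"
  by (induction A rule: infinite_finite_induct) auto

lemma vs_fun: "vector_space (\<lambda>(r::real) (f::'c \<Rightarrow> real) c. r * f c)"
  by unfold_locales (auto simp: fun_eq_iff algebra_simps)

lemma dim_bound:
  fixes v :: "'a \<Rightarrow> 'c \<Rightarrow> real"
  assumes finA: "finite A" and finB: "finite B"
    and inj: "\<And>\<phi>. (\<And>c. (\<Sum>x\<in>A. \<phi> x * v x c) = 0) \<Longrightarrow> (\<forall>x\<in>A. \<phi> x = 0)"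
    and supp: "\<And>x c. x \<in> A \<Longrightarrow> c \<notin> B \<Longrightarrow> v x c = 0"
  shows "card A \<le> card B"
proof -
  interpret V: vector_space "\<lambda>(r::real) (f::'c \<Rightarrow> real) c. r * f c" by (rule vs_fun)
  have injv: "inj_on v A"
  proof
    fix x y assume xy: "x \<in> A" "y \<in> A" "v x = v y"
    show "x = y"
    proof (rule ccontr)
      assume ne: "x \<noteq> y"
      define \<phi> where "\<phi> = (\<lambda>z. if z = x then (1::real) else if z = y then -1 else 0)"
      have "(\<Sum>z\<in>A. \<phi> z * v z c) = 0" for c
      proof -
        have "(\<Sum>z\<in>A. \<phi> z * v z c) = (\<Sum>z\<in>{x,y}. \<phi> z * v z c)"
          using xy finA by (intro sum.mono_neutral_right) (auto simp: \<phi>_def)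
        also have "\<dots> = 0" using ne xy by (simp add: \<phi>_def)
        finally show ?thesis .
      qed
      then have "\<phi> x = 0" using inj xy by blast
      then show False by (simp add: \<phi>_def)
    qed
  qed
  define ind where "ind = (\<lambda>b (c::'c). if c = b then (1::real) else 0)"
  have indep: "V.independent (v ` A)"
  proof (rule V.independent_if_scalars_zero)
    show "finite (v ` A)" using finA by simp
    fix f w assume sum0: "(\<Sum>u\<in>v ` A. (\<lambda>c. f u * u c)) = 0" and w: "w \<in> v ` A"
    have "(\<Sum>x\<in>A. f (v x) * v x c) = 0" for c
    proof -
      have "(\<Sum>x\<in>A. f (v x) * v x c) = (\<Sum>u\<in>v ` A. f u * u c)"
        using sum.reindex[OF injv, of "\<lambda>u. f u * u c"] by simp
      also have "\<dots> = (\<Sum>u\<in>v ` A. (\<lambda>c. f u * u c)) c" by (simp add: sum_fun_apply)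
      also have "\<dots> = 0" using sum0 by simp
      finally show ?thesis .
    qed
    then have "\<forall>x\<in>A. f (v x) = 0" using inj[of "\<lambda>x. f (v x)"] by blast
    then show "f w = 0" using w by blast
  qed
  have spn: "v ` A \<subseteq> V.span (ind ` B)"
  proof
    fix u assume "u \<in> v ` A"
    then obtain x where x: "x \<in> A" "u = v x" by auto
    have "v x = (\<Sum>b\<in>B. (\<lambda>c. v x b * ind b c))"
    proof
      fix c
      show "v x c = (\<Sum>b\<in>B. (\<lambda>c. v x b * ind b c)) c"
      proof -
        have "(\<Sum>b\<in>B. (\<lambda>c. v x b * ind b c)) c = (\<Sum>b\<in>B. if b = c then v x b else 0)"
          unfolding sum_fun_apply ind_def by (intro sum.cong) auto
        also have "\<dots> = v x c" using supp[OF x(1)] finB by (simp add: sum.delta)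
        finally show ?thesis by simp
      qed
    qed
    also have "\<dots> \<in> V.span (ind ` B)"
      by (intro V.span_sum V.span_scale V.span_base) auto
    finally show "u \<in> V.span (ind ` B)" using x by simp
  qed
  have "card (v ` A) \<le> card (ind ` B)"
    using V.independent_span_bound[OF _ indep spn] finB by simp
  also have "\<dots> \<le> card B" using finB by (rule card_image_le)
  finally show ?thesis using card_image[OF injv] by simp
qed




lemma prod_coeffs:
  assumes "finite T"
  shows "\<exists>b. \<forall>t::real. (\<Prod>s\<in>T. t - real s) = (\<Sum>i\<le>card T. b i * t ^ i)"
proof -
  define P where "P = (\<Prod>s\<in>T. [:- real s, 1:])"
  have degP: "degree P \<le> card T"
  proof -
    have "degree P \<le> sum (degree \<circ> (\<lambda>s. [:- real s, 1:])) T"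
      unfolding P_def by (rule degree_prod_sum_le[OF assms])
    also have "\<dots> = card T" by simp
    finally show ?thesis .
  qed
  have "(\<Prod>s\<in>T. t - real s) = (\<Sum>i\<le>card T. coeff P i * t ^ i)" for t
  proof -
    have "(\<Prod>s\<in>T. t - real s) = poly P t" unfolding P_def poly_prod by simp
    also have "\<dots> = (\<Sum>i\<le>degree P. coeff P i * t ^ i)" by (rule poly_altdef)
    also have "\<dots> = (\<Sum>i\<le>card T. coeff P i * t ^ i)"
      using degP by (intro sum.mono_neutral_left) (auto simp: coeff_eq_0)
    finally show ?thesis .
  qed
  then show ?thesis by blast
qed

lemma g_coeffs:
  assumes "finite T" "card T = n - c" "1 \<le> c" "c \<le> n"
  shows "\<exists>a. \<forall>t::real. t ^ (c - 1) * (\<Prod>s\<in>T. t - real s) = (\<Sum>k\<in>{c..n}. a k * t ^ (k - 1))"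
proof -
  obtain b where b: "\<forall>t::real. (\<Prod>s\<in>T. t - real s) = (\<Sum>i\<le>card T. b i * t ^ i)"
    using prod_coeffs[OF assms(1)] by blast
  define a where "a = (\<lambda>k. b (k - c))"
  have "t ^ (c - 1) * (\<Prod>s\<in>T. t - real s) = (\<Sum>k\<in>{c..n}. a k * t ^ (k - 1))" for t :: real
  proof -
    have "t ^ (c - 1) * (\<Prod>s\<in>T. t - real s) = (\<Sum>i\<in>{0..n-c}. b i * t ^ (i + c - 1))"
      using b assms(2,3) by (simp add: sum_distrib_left atMost_atLeast0 power_add[symmetric] algebra_simps)
    also have "\<dots> = (\<Sum>i\<in>{0..n-c}. a (i + c) * t ^ (i + c - 1))" by (simp add: a_def)
    also have "\<dots> = (\<Sum>k\<in>{0+c..n-c+c}. a k * t ^ (k - 1))"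
      by (rule sum.shift_bounds_cl_nat_ivl[symmetric])
    also have "\<dots> = (\<Sum>k\<in>{c..n}. a k * t ^ (k - 1))" using assms by simp
    finally show ?thesis .
  qed
  then show ?thesis by blast
qed




lemma box_zero:
  fixes p :: "nat \<Rightarrow> nat" and \<phi> :: "(nat \<Rightarrow> nat) \<Rightarrow> real"
  assumes mono: "\<forall>i\<in>{1..<d}. p i \<le> p (i+1)" and p1: "1 \<le> p 1" and pd: "p d \<le> n"
    and orth: "\<forall>y\<in>QQ n d p. (\<Sum>x\<in>all_edges n d. \<phi> x * (\<Prod>j\<in>{1..d}. real (x j) ^ (y j - 1))) = 0"
    and pi: "\<pi> permutes {1..d}" and Ssub: "\<forall>j\<in>{1..d}. S j \<subseteq> {1..n}"
    and Scard: "\<forall>j\<in>{1..d}. card (S j) = p (\<pi> j)"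
    and e: "e \<in> PiE {1..d} S" and zero: "\<forall>x\<in>PiE {1..d} S. x \<noteq> e \<longrightarrow> \<phi> x = 0"
  shows "\<phi> e = 0"
proof -
  let ?D = "{1..d}" and ?E = "all_edges n d"
  define c where "c = (\<lambda>j. p (\<pi> j))"
  have pbound: "1 \<le> p i \<and> p i \<le> n" if "i \<in> ?D" for i
    using p_mono[OF mono, of 1 i] p_mono[OF mono, of i d] that p1 pd by auto
  have cb: "1 \<le> c j \<and> c j \<le> n" if "j \<in> ?D" for j
    unfolding c_def using pbound permutes_in_image[OF pi] that by blast
  define T where "T = (\<lambda>j. {1..n} - S j)"
  have cardT: "card (T j) = n - c j" if "j \<in> ?D" for j
    unfolding T_def c_def using card_Diff_subset[of "S j" "{1..n}"] Ssub Scard that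
    by (simp add: finite_subset)
  have "\<forall>j\<in>?D. \<exists>a. \<forall>t::real. t ^ (c j - 1) * (\<Prod>s\<in>T j. t - real s) = (\<Sum>k\<in>{c j..n}. a k * t ^ (k - 1))"
    using g_coeffs cardT cb unfolding T_def by simp
  then obtain a where a: "\<forall>j\<in>?D. \<forall>t::real. t ^ (c j - 1) * (\<Prod>s\<in>T j. t - real s) = (\<Sum>k\<in>{c j..n}. a j k * t ^ (k - 1))"
    by (metis (no_types) bchoice)
  define g where "g = (\<lambda>j (t::real). t ^ (c j - 1) * (\<Prod>s\<in>T j. t - real s))"
  define w where "w = (\<lambda>x::nat\<Rightarrow>nat. \<Prod>j\<in>?D. g j (real (x j)))"
  define r where "r = (\<lambda>(y::nat\<Rightarrow>nat) (x::nat\<Rightarrow>nat). \<Prod>j\<in>?D. real (x j) ^ (y j - 1))"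
  define Y where "Y = PiE ?D (\<lambda>j. {c j..n})"
  define A where "A = (\<lambda>y::nat\<Rightarrow>nat. \<Prod>j\<in>?D. a j (y j))"
  have expand: "w x = (\<Sum>y\<in>Y. A y * r y x)" for x
  proof -
    have "w x = (\<Prod>j\<in>?D. \<Sum>k\<in>{c j..n}. a j k * real (x j) ^ (k - 1))"
      unfolding w_def g_def using a by (intro prod.cong) auto
    also have "\<dots> = (\<Sum>y\<in>Y. \<Prod>j\<in>?D. a j (y j) * real (x j) ^ (y j - 1))"
      unfolding Y_def by (rule prod_sum_PiE) auto
    also have "\<dots> = (\<Sum>y\<in>Y. A y * r y x)"
      unfolding A_def r_def by (simp add: prod.distrib)
    finally show ?thesis .
  qed
  have YQ: "Y \<subseteq> QQ n d p"
  proof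
    fix y assume y: "y \<in> Y"
    have yE: "y \<in> ({1..d} \<rightarrow>\<^sub>E {1..n})" using y cb unfolding Y_def by (force simp: PiE_iff)
    have "\<forall>j\<in>?D. p (\<pi> j) \<le> y j" using y unfolding Y_def c_def by (auto simp: PiE_iff)
    then have "\<forall>i\<in>?D. p i \<le> ord_stat d y i" using perm_imp_Q[OF mono pi] by blast
    then show "y \<in> QQ n d p" using yE unfolding QQ_def by simp
  qed
  have finY: "finite Y" unfolding Y_def by (simp add: finite_PiE)
  have sum0: "(\<Sum>x\<in>?E. \<phi> x * w x) = 0"
  proof -
    have "(\<Sum>x\<in>?E. \<phi> x * w x) = (\<Sum>x\<in>?E. \<Sum>y\<in>Y. A y * (\<phi> x * r y x))"
      unfolding expand by (simp add: sum_distrib_left algebra_simps)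
    also have "\<dots> = (\<Sum>y\<in>Y. A y * (\<Sum>x\<in>?E. \<phi> x * r y x))"
      by (subst sum.swap) (simp add: sum_distrib_left)
    also have "\<dots> = 0" using orth YQ unfolding r_def by (intro sum.neutral) auto
    finally show ?thesis .
  qed
  have eE: "e \<in> ?E" using e Ssub unfolding all_edges_def by (auto simp: PiE_iff) (meson atLeastAtMost_iff subsetD)+
  have others: "\<phi> x * w x = 0" if x: "x \<in> ?E - {e}" for x
  proof (cases "x \<in> PiE ?D S")
    case True then show ?thesis using zero x by simp
  next
    case False
    then obtain j where j: "j \<in> ?D" "x j \<notin> S j" using x unfolding all_edges_def by (auto simp: PiE_iff)
    have "x j \<in> T j" using j x unfolding T_def all_edges_def by (auto simp: PiE_iff)
    then have "(\<Prod>s\<in>T j. real (x j) - real s) = 0"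
      by (intro prod_zero) (auto simp: T_def)
    then have "g j (real (x j)) = 0" unfolding g_def by simp
    then have "w x = 0" unfolding w_def using j by (intro prod_zero) auto
    then show ?thesis by simp
  qed
  have "(\<Sum>x\<in>?E. \<phi> x * w x) = \<phi> e * w e + (\<Sum>x\<in>?E - {e}. \<phi> x * w x)"
    using sum.remove[OF finite_E eE] by simp
  also have "(\<Sum>x\<in>?E - {e}. \<phi> x * w x) = 0" using others by (intro sum.neutral) auto
  finally have "\<phi> e * w e = 0" using sum0 by simp
  moreover have "w e \<noteq> 0"
  proof -
    have "g j (real (e j)) \<noteq> 0" if j: "j \<in> ?D" for j
    proof -
      have ej1: "e j \<in> S j" using e j by (auto simp: PiE_iff)
      have ej: "e j \<in> S j" "e j \<ge> 1" using ej1 bspec[OF Ssub j] by auto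
      have "(\<Prod>s\<in>T j. real (e j) - real s) \<noteq> 0"
        using ej(1) by (subst prod_zero_iff) (auto simp: T_def)
      then show ?thesis unfolding g_def using ej(2) by simp
    qed
    then show ?thesis unfolding w_def by (subst prod_zero_iff) auto
  qed
  ultimately show ?thesis by simp
qed




lemma lower_core:
  fixes p :: "nat \<Rightarrow> nat" and \<phi> :: "(nat \<Rightarrow> nat) \<Rightarrow> real"
  assumes mono: "\<forall>i\<in>{1..<d}. p i \<le> p (i+1)" and p1: "1 \<le> p 1" and pd: "p d \<le> n"
    and ws: "weakly_saturated n d p H"
    and orth: "\<forall>y\<in>QQ n d p. (\<Sum>x\<in>all_edges n d. \<phi> x * (\<Prod>j\<in>{1..d}. real (x j) ^ (y j - 1))) = 0"
    and hz: "\<forall>h\<in>H. \<phi> h = 0"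
  shows "\<forall>x\<in>all_edges n d. \<phi> x = 0"
proof -
  obtain es where es: "distinct es" "set es = all_edges n d - H"
    "\<forall>k<length es. copy_containing n d p (H \<union> set (take (Suc k) es)) (es ! k)"
    using ws[unfolded weakly_saturated_def] by (elim exE conjE) (rule that; assumption)
  have "\<forall>x\<in>set (take k es). \<phi> x = 0" if "k \<le> length es" for k
    using that
  proof (induction k)
    case 0 then show ?case by simp
  next
    case (Suc k)
    then have k: "k < length es" by simp
    have IH: "\<forall>x\<in>set (take k es). \<phi> x = 0" using Suc by simp
    obtain \<pi> S where cp: "\<pi> permutes {1..d}" "\<forall>i\<in>{1..d}. S i \<subseteq> {1..n} \<and> card (S i) = p (\<pi> i)"
      "es ! k \<in> PiE {1..d} S" "PiE {1..d} S \<subseteq> H \<union> set (take (Suc k) es)"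
    proof -
      have cc: "copy_containing n d p (H \<union> set (take (Suc k) es)) (es ! k)" using es(3) k by simp
      show ?thesis using cc[unfolded copy_containing_def] by (elim exE conjE) (rule that; assumption)
    qed
    have tk: "take (Suc k) es = take k es @ [es ! k]" using k by (simp add: take_Suc_conv_app_nth)
    have "\<phi> (es ! k) = 0"
    proof (rule box_zero[OF mono p1 pd orth cp(1)])
      show "\<forall>j\<in>{1..d}. S j \<subseteq> {1..n}" "\<forall>j\<in>{1..d}. card (S j) = p (\<pi> j)" using cp(2) by auto
      show "es ! k \<in> PiE {1..d} S" by (rule cp(3))
      show "\<forall>x\<in>PiE {1..d} S. x \<noteq> es ! k \<longrightarrow> \<phi> x = 0"
      proof (intro ballI impI)
        fix x assume x: "x \<in> PiE {1..d} S" "x \<noteq> es ! k"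
        have "x \<in> H \<union> set (take k es @ [es ! k])" using cp(4) x(1) tk by (metis subsetD)
        then have "x \<in> H \<or> x \<in> set (take k es)" using x(2) by simp
        then show "\<phi> x = 0" using hz IH by blast
      qed
    qed
    then show ?case using IH unfolding tk by simp
  qed
  from this[of "length es"] have "\<forall>x\<in>set es. \<phi> x = 0" by simp
  then show ?thesis using es(2) hz by blast
qed

lemma lower:
  fixes p :: "nat \<Rightarrow> nat"
  assumes mono: "\<forall>i\<in>{1..<d}. p i \<le> p (i+1)" and p1: "1 \<le> p 1" and pd: "p d \<le> n"
    and ws: "weakly_saturated n d p H"
  shows "n ^ d \<le> card H + card (QQ n d p)"
proof -
  let ?E = "all_edges n d" and ?Q = "QQ n d p"
  have HE: "H \<subseteq> ?E" using ws unfolding weakly_saturated_def by simp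
  have finH: "finite H" using finite_subset[OF HE finite_E] .
  have finQ: "finite ?Q" using finite_subset[OF QQ_sub finite_E] .
  define r where "r = (\<lambda>(y::nat\<Rightarrow>nat) (x::nat\<Rightarrow>nat). \<Prod>j\<in>{1..d}. real (x j) ^ (y j - 1))"
  define v where "v = (\<lambda>x c. case c of Inl y \<Rightarrow> (if y \<in> ?Q then r y x else 0)
                                    | Inr h \<Rightarrow> (if h \<in> H \<and> h = x then (1::real) else 0))"
  define B where "B = Inl ` ?Q \<union> Inr ` H"
  have "card ?E \<le> card B"
  proof (rule dim_bound[where v = v])
    show "finite ?E" by (rule finite_E)
    show "finite B" unfolding B_def using finH finQ by simp
    show "v x c = 0" if "x \<in> ?E" "c \<notin> B" for x c
      using that unfolding B_def v_def by (cases c) auto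
    fix \<phi> assume h: "\<And>c. (\<Sum>x\<in>?E. \<phi> x * v x c) = 0"
    have orth: "\<forall>y\<in>?Q. (\<Sum>x\<in>?E. \<phi> x * (\<Prod>j\<in>{1..d}. real (x j) ^ (y j - 1))) = 0"
    proof
      fix y assume y: "y \<in> ?Q"
      show "(\<Sum>x\<in>?E. \<phi> x * (\<Prod>j\<in>{1..d}. real (x j) ^ (y j - 1))) = 0"
        using h[of "Inl y"] y unfolding v_def r_def by simp
    qed
    have hz: "\<forall>h\<in>H. \<phi> h = 0"
    proof
      fix k assume k: "k \<in> H"
      have "(\<Sum>x\<in>?E. \<phi> x * v x (Inr k)) = (\<Sum>x\<in>?E. if x = k then \<phi> x else 0)"
        unfolding v_def using k by (intro sum.cong) auto
      also have "\<dots> = \<phi> k" using k HE finite_E by (simp add: sum.delta' subsetD)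
      finally show "\<phi> k = 0" using h[of "Inr k"] by simp
    qed
    show "\<forall>x\<in>?E. \<phi> x = 0" by (rule lower_core[OF mono p1 pd ws orth hz])
  qed
  also have "card B \<le> card (Inl ` ?Q :: ((nat\<Rightarrow>nat) + (nat\<Rightarrow>nat)) set) + card (Inr ` H :: ((nat\<Rightarrow>nat) + (nat\<Rightarrow>nat)) set)"
    unfolding B_def by (rule card_Un_le)
  also have "\<dots> = card ?Q + card H" by (simp add: card_image)
  finally show ?thesis using card_E by simp
qed




lemma W_formula:
  fixes p :: "nat \<Rightarrow> nat"
  assumes mono: "\<forall>i\<in>{1..<d}. p i \<le> p (i+1)" and p1: "1 \<le> p 1" and pd: "p d \<le> n"
  shows "W n d p = n ^ d - card (QQ n d p)" "card (QQ n d p) \<le> n ^ d"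
proof -
  let ?S = "{H. weakly_saturated n d p H}"
  have fin: "finite (card ` ?S)"
  proof -
    have "?S \<subseteq> Pow (all_edges n d)" unfolding weakly_saturated_def by auto
    then have "finite ?S" using finite_E by (meson finite_Pow_iff finite_subset)
    then show ?thesis by simp
  qed
  have up: "all_edges n d - QQ n d p \<in> ?S" using upper[OF mono p1 pd] by simp
  have "W n d p \<le> card (all_edges n d - QQ n d p)"
    unfolding W_def using fin up by (intro Min_le) auto
  then have le1: "W n d p \<le> n ^ d - card (QQ n d p)" using card_upper by simp
  have "W n d p \<in> card ` ?S" unfolding W_def using fin up by (intro Min_in) auto
  then obtain H where H: "weakly_saturated n d p H" "W n d p = card H" by auto
  have "n ^ d \<le> card H + card (QQ n d p)" using lower[OF mono p1 pd H(1)] .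
  then show "W n d p = n ^ d - card (QQ n d p)" using le1 H(2) by linarith
  show "card (QQ n d p) \<le> n ^ d"
    using card_mono[OF finite_E QQ_sub] card_E by metis
qed

lemma QQ2:
  fixes a b n :: nat
  assumes "1 \<le> a" "a \<le> b" "b \<le> n"
  shows "QQ n 2 (\<lambda>i. if i = 1 then a else b) =
           PiE {1..2} (\<lambda>_. {a..n}) - PiE {1..2} (\<lambda>_. {a..<b})"
proof -
  have two: "{1..2::nat} = {1,2}" by auto
  have os: "ord_stat 2 x 1 = min (x 1) (x 2) \<and> ord_stat 2 x 2 = max (x 1) (x 2)" for x
    unfolding ord_stat_def by (simp add: numeral_2_eq_2 upt_rec)
  have os2: "ord_stat 2 x (Suc 0) = min (x 1) (x 2)" for x using os by simp
  have os3: "ord_stat 2 x 2 = max (x 1) (x 2)" for x using os by simp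
  have mem: "x \<in> PiE {1..2} S \<longleftrightarrow> x \<in> extensional {1,2} \<and> x 1 \<in> S 1 \<and> x 2 \<in> S 2"
    for x :: "nat \<Rightarrow> nat" and S :: "nat \<Rightarrow> nat set"
    unfolding two by (simp add: PiE_iff) blast
  show ?thesis
  proof (rule set_eqI)
    fix x :: "nat \<Rightarrow> nat"
    have "x \<in> QQ n 2 (\<lambda>i. if i = 1 then a else b) \<longleftrightarrow>
      x \<in> extensional {1,2} \<and> x 1 \<in> {1..n} \<and> x 2 \<in> {1..n} \<and> a \<le> min (x 1) (x 2) \<and> b \<le> max (x 1) (x 2)"
    proof -
      have two': "{Suc 0..2} = {Suc 0, 2}" by auto
      have "x \<in> QQ n 2 (\<lambda>i. if i = 1 then a else b) \<longleftrightarrow>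
          x \<in> PiE {1..2} (\<lambda>_. {1..n}) \<and> a \<le> ord_stat 2 x 1 \<and> b \<le> ord_stat 2 x 2"
        unfolding QQ_def by (simp add: two')
      then show ?thesis unfolding mem[of x "\<lambda>_. {1..n}"] by (simp add: os2 os3)
    qed
    also have "\<dots> \<longleftrightarrow> x \<in> extensional {1,2} \<and> x 1 \<in> {a..n} \<and> x 2 \<in> {a..n} \<and> \<not> (x 1 \<in> {a..<b} \<and> x 2 \<in> {a..<b})"
      using assms by (auto simp: min_def max_def)
    also have "\<dots> \<longleftrightarrow> x \<in> PiE {1..2} (\<lambda>_. {a..n}) - PiE {1..2} (\<lambda>_. {a..<b})"
      unfolding Diff_iff mem by blast
    finally show "x \<in> QQ n 2 (\<lambda>i. if i = 1 then a else b) \<longleftrightarrow> x \<in> PiE {1..2} (\<lambda>_. {a..n}) - PiE {1..2} (\<lambda>_. {a..<b})" .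
  qed
qed

lemma card_QQ2:
  fixes a b n :: nat
  assumes "1 \<le> a" "a \<le> b" "b \<le> n"
  shows "card (QQ n 2 (\<lambda>i. if i = 1 then a else b)) = (n + 1 - a) ^ 2 - (b - a) ^ 2"
    "(b - a) ^ 2 \<le> (n + 1 - a) ^ 2"
proof -
  have sub: "PiE {1..2} (\<lambda>_. {a..<b}) \<subseteq> PiE {1..2::nat} (\<lambda>_. {a..n})"
    using assms by (intro PiE_mono) auto
  have c1: "card (PiE {1..2::nat} (\<lambda>_. {a..n})) = (n + 1 - a) ^ 2" by (simp add: card_PiE)
  have c2: "card (PiE {1..2::nat} (\<lambda>_. {a..<b})) = (b - a) ^ 2" by (simp add: card_PiE)
  show "card (QQ n 2 (\<lambda>i. if i = 1 then a else b)) = (n + 1 - a) ^ 2 - (b - a) ^ 2"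
    unfolding QQ2[OF assms] using card_Diff_subset[OF _ sub] c1 c2 by (simp add: finite_PiE)
  show "(b - a) ^ 2 \<le> (n + 1 - a) ^ 2"
    using card_mono[OF _ sub] c1 c2 by (simp add: finite_PiE)
qed

theorem theorem2:
  shows "(\<forall>(n::nat) (d::nat) (p::nat \<Rightarrow> nat).
            d \<ge> 1 \<and> 1 \<le> p 1 \<and> (\<forall>i\<in>{1..<d}. p i \<le> p (i+1)) \<and> p d \<le> n \<longrightarrow>
            int (W n d p) = int n ^ d - int (q n d p))
       \<and> (\<forall>(n::nat) (a::nat) (b::nat). 1 \<le> a \<and> a \<le> b \<and> b \<le> n \<longrightarrow>
            int (W n 2 (\<lambda>i. if i = 1 then a else b)) =
              int n ^ 2 - (int n - int a + 1) ^ 2 + (int b - int a) ^ 2)"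
proof (intro conjI allI impI)
  fix n d :: nat and p :: "nat \<Rightarrow> nat"
  assume h: "d \<ge> 1 \<and> 1 \<le> p 1 \<and> (\<forall>i\<in>{1..<d}. p i \<le> p (i+1)) \<and> p d \<le> n"
  then have m: "\<forall>i\<in>{1..<d}. p i \<le> p (i+1)" "1 \<le> p 1" "p d \<le> n" by auto
  show "int (W n d p) = int n ^ d - int (q n d p)"
    using W_formula[OF m] unfolding q_QQ by (simp add: of_nat_diff)
next
  fix n a b :: nat
  assume h: "1 \<le> a \<and> a \<le> b \<and> b \<le> n"
  define p where "p = (\<lambda>i::nat. if i = 1 then a else b)"
  have m: "\<forall>i\<in>{1..<2}. p i \<le> p (i+1)" "1 \<le> p 1" "p 2 \<le> n" using h by (auto simp: p_def)
  have W2: "W n 2 p = n ^ 2 - card (QQ n 2 p)" "card (QQ n 2 p) \<le> n ^ 2"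
    using W_formula[OF m] by auto
  have cq: "card (QQ n 2 p) = (n + 1 - a) ^ 2 - (b - a) ^ 2" "(b - a) ^ 2 \<le> (n + 1 - a) ^ 2"
    using card_QQ2[of a b n] h unfolding p_def by auto
  have "int (W n 2 p) = int (n ^ 2) - int (card (QQ n 2 p))"
    using W2 by (simp add: of_nat_diff)
  also have "int (card (QQ n 2 p)) = int ((n + 1 - a) ^ 2) - int ((b - a) ^ 2)"
    using cq by (simp add: of_nat_diff)
  finally have "int (W n 2 p) = int n ^ 2 - (int ((n + 1 - a) ^ 2) - int ((b - a) ^ 2))"
    by simp
  also have "\<dots> = int n ^ 2 - (int n - int a + 1) ^ 2 + (int b - int a) ^ 2"
    using h by (simp add: of_nat_diff)
  finally show "int (W n 2 (\<lambda>i. if i = 1 then a else b)) =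
              int n ^ 2 - (int n - int a + 1) ^ 2 + (int b - int a) ^ 2" unfolding p_def .
qed


end
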